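(* Let $\delta(n)=o(n)$. Then there is $n_0$ such that for all $n\ge n_0$, every $\delta(n)$-random labeled graph on $n$ nodes has diameter exactly $2$.
   Context: $C(x\mid y)$ denotes the Kolmogorov complexity of $x$ given $y$ with respect to a fixed universal Turing machine. A labeled graph $G$ on $\{1,\dots,n\}$ is encoded by the binary string $E(G)$ of length $n(n-1)/2$ whose $i$-th bit indicates presence of the $i$-th possible edge in lexicographic order. With $\mathcal G$ the set of all labeled graphs on $\{1,\dots,n\}$, $G$ is $\delta(n)$-random if $C(E(G)\mid n,\delta,\mathcal G)\ge n(n-1)/2-\delta(n)$. *)

theory Defs
  imports Main "HOL-Library.Nat_Bijection" "HOL-Library.Extended_Nat" "HOL-Library.Landau_Symbols"
begin

datatype recf = Zero | Succ | Proj nat | Comp recf "recf list" | Prim recf recf | Mn recf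

inductive ev :: "recf \<Rightarrow> nat list \<Rightarrow> nat \<Rightarrow> bool" where
  ev_Zero: "ev Zero xs 0"
| ev_Succ: "ev Succ (x # xs) (Suc x)"
| ev_Proj: "i < length xs \<Longrightarrow> ev (Proj i) xs (xs ! i)"
| ev_Comp: "list_all2 (\<lambda>g y. ev g xs y) gs ys \<Longrightarrow> ev f ys z \<Longrightarrow> ev (Comp f gs) xs z"
| ev_Prim0: "ev g xs z \<Longrightarrow> ev (Prim g h) (0 # xs) z"
| ev_PrimS: "ev (Prim g h) (k # xs) y \<Longrightarrow> ev h (k # y # xs) z \<Longrightarrow> ev (Prim g h) (Suc k # xs) z"
| ev_Mn: "ev f (z # xs) 0 \<Longrightarrow> (\<forall>y<z. \<exists>v. v \<noteq> 0 \<and> ev f (y # xs) v) \<Longrightarrow> ev (Mn f) xs z"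

text \<open>Bijective coding of binary strings as natural numbers.\<close>
fun nat_of_bl :: "bool list \<Rightarrow> nat" where
  "nat_of_bl [] = 0"
| "nat_of_bl (b # bs) = 2 * nat_of_bl bs + (if b then 2 else 1)"

definition outputs :: "recf \<Rightarrow> bool list \<Rightarrow> nat \<Rightarrow> bool list \<Rightarrow> bool" where
  "outputs M p y x \<longleftrightarrow> ev M [nat_of_bl p, y] (nat_of_bl x)"

text \<open>Every universal machine in the usual sense has this property.\<close>
definition universal :: "recf \<Rightarrow> bool" where
  "universal U \<longleftrightarrow> (\<forall>M. \<exists>c. \<forall>p y x. outputs M p y x \<longrightarrow>
      (\<exists>q. outputs U q y x \<and> length q \<le> length p + c))"

definition KC :: "recf \<Rightarrow> bool list \<Rightarrow> nat \<Rightarrow> nat" where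
  "KC U x y = (LEAST k. \<exists>p. length p = k \<and> outputs U p y x)"

definition graph_on :: "nat \<Rightarrow> nat set set \<Rightarrow> bool" where
  "graph_on n G \<longleftrightarrow> G \<subseteq> {{i, j} | i j. i \<in> {1..n} \<and> j \<in> {1..n} \<and> i \<noteq> j}"

definition edge_list :: "nat \<Rightarrow> (nat \<times> nat) list" where
  "edge_list n = [(i, j). i \<leftarrow> [1..<n+1], j \<leftarrow> [Suc i..<n+1]]"

definition E :: "nat \<Rightarrow> nat set set \<Rightarrow> bool list" where
  "E n G = map (\<lambda>(i, j). {i, j} \<in> G) (edge_list n)"

text \<open>delta-randomness; the conditional information (n, delta(n), the set of graphs on n nodes)
  is coded as the pair (n, delta n) since the set of graphs is determined by n.\<close>
definition random_graph :: "nat \<Rightarrow> (nat \<Rightarrow> nat) \<Rightarrow> recf \<Rightarrow> nat set set \<Rightarrow> bool" where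
  "random_graph n \<delta> U G \<longleftrightarrow>
     int (KC U (E n G) (prod_encode (n, \<delta> n))) \<ge> int (n * (n - 1) div 2) - int (\<delta> n)"

definition walk :: "nat \<Rightarrow> nat set set \<Rightarrow> nat list \<Rightarrow> bool" where
  "walk n G xs \<longleftrightarrow> xs \<noteq> [] \<and> set xs \<subseteq> {1..n} \<and>
     (\<forall>i. Suc i < length xs \<longrightarrow> {xs ! i, xs ! Suc i} \<in> G)"

text \<open>Graph distance (infinite if no path).\<close>
definition gdist :: "nat \<Rightarrow> nat set set \<Rightarrow> nat \<Rightarrow> nat \<Rightarrow> enat" where
  "gdist n G u v = (INF k \<in> {k. \<exists>xs. walk n G xs \<and> hd xs = u \<and> last xs = v \<and> length xs = Suc k}. enat k)"

definition diameter :: "nat \<Rightarrow> nat set set \<Rightarrow> enat" where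
  "diameter n G = (SUP u \<in> {1..n}. SUP v \<in> {1..n}. gdist n G u v)"

end

theory Submission
  imports Defs "HOL-Library.FuncSet" "HOL-Real_Asymp.Real_Asymp"
begin


definition rf :: "nat \<Rightarrow> (nat list \<Rightarrow> nat) \<Rightarrow> bool" where
  "rf k f \<longleftrightarrow> (\<exists>M. \<forall>xs. length xs = k \<longrightarrow> ev M xs (f xs))"

lemma rf_cong: "rf k f \<Longrightarrow> (\<And>xs. length xs = k \<Longrightarrow> f xs = g xs) \<Longrightarrow> rf k g"
  unfolding rf_def by metis

lemma rf_zero: "rf k (\<lambda>_. 0)"
  unfolding rf_def by (rule exI[of _ Zero]) (auto intro: ev_Zero)

lemma rf_proj: "i < k \<Longrightarrow> rf k (\<lambda>xs. xs ! i)"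
  unfolding rf_def by (rule exI[of _ "Proj i"]) (auto intro: ev_Proj)

lemma rf_comp:
  assumes g: "rf (length fs) g" and fs: "list_all (rf k) fs"
  shows "rf k (\<lambda>xs. g (map (\<lambda>f. f xs) fs))"
proof -
  obtain Mg where Mg: "\<forall>ys. length ys = length fs \<longrightarrow> ev Mg ys (g ys)"
    using g unfolding rf_def by blast
  have "\<exists>Ms. list_all2 (\<lambda>M f. \<forall>xs. length xs = k \<longrightarrow> ev M xs (f xs)) Ms fs"
    using fs
  proof (induction fs)
    case Nil then show ?case by auto
  next
    case (Cons f fs)
    then obtain Ms where "list_all2 (\<lambda>M f. \<forall>xs. length xs = k \<longrightarrow> ev M xs (f xs)) Ms fs" by auto
    moreover obtain M where "\<forall>xs. length xs = k \<longrightarrow> ev M xs (f xs)"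
      using Cons.prems unfolding rf_def by auto
    ultimately show ?case by (intro exI[of _ "M # Ms"]) auto
  qed
  then obtain Ms where Ms: "list_all2 (\<lambda>M f. \<forall>xs. length xs = k \<longrightarrow> ev M xs (f xs)) Ms fs" by blast
  show ?thesis unfolding rf_def
  proof (intro exI[of _ "Comp Mg Ms"] allI impI)
    fix xs :: "nat list" assume len: "length xs = k"
    have "list_all2 (\<lambda>M y. ev M xs y) Ms (map (\<lambda>f. f xs) fs)"
      unfolding list_all2_map2 using Ms by (rule list_all2_mono) (use len in auto)
    moreover have "ev Mg (map (\<lambda>f. f xs) fs) (g (map (\<lambda>f. f xs) fs))" using Mg by simp
    ultimately show "ev (Comp Mg Ms) xs (g (map (\<lambda>f. f xs) fs))" by (rule ev_Comp)
  qed
qed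

lemma rf_comp1: "rf 1 g \<Longrightarrow> rf k f1 \<Longrightarrow> rf k (\<lambda>xs. g [f1 xs])"
  using rf_comp[of "[f1]" g k] by simp
lemma rf_comp2: "rf 2 g \<Longrightarrow> rf k f1 \<Longrightarrow> rf k f2 \<Longrightarrow> rf k (\<lambda>xs. g [f1 xs, f2 xs])"
  using rf_comp[of "[f1,f2]" g k] by (simp add: numeral_2_eq_2)
lemma rf_comp3: "rf 3 g \<Longrightarrow> rf k f1 \<Longrightarrow> rf k f2 \<Longrightarrow> rf k f3 \<Longrightarrow> rf k (\<lambda>xs. g [f1 xs, f2 xs, f3 xs])"
  using rf_comp[of "[f1,f2,f3]" g k] by (simp add: numeral_3_eq_3)
lemma rf_comp4: "rf 4 g \<Longrightarrow> rf k f1 \<Longrightarrow> rf k f2 \<Longrightarrow> rf k f3 \<Longrightarrow> rf k f4 \<Longrightarrow> rf k (\<lambda>xs. g [f1 xs, f2 xs, f3 xs, f4 xs])"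
  using rf_comp[of "[f1,f2,f3,f4]" g k] by (simp add: eval_nat_numeral)

lemma rf_gen1: "rf 1 (\<lambda>ys. F (ys!0)) \<Longrightarrow> rf k a \<Longrightarrow> rf k (\<lambda>xs. F (a xs))"
  using rf_comp1[of "\<lambda>ys. F (ys!0)" k a] by simp
lemma rf_gen2: "rf 2 (\<lambda>ys. F (ys!0) (ys!1)) \<Longrightarrow> rf k a \<Longrightarrow> rf k b \<Longrightarrow> rf k (\<lambda>xs. F (a xs) (b xs))"
  using rf_comp2[of "\<lambda>ys. F (ys!0) (ys!1)" k a b] by simp
lemma rf_gen3: "rf 3 (\<lambda>ys. F (ys!0) (ys!1) (ys!2)) \<Longrightarrow> rf k a \<Longrightarrow> rf k b \<Longrightarrow> rf k c \<Longrightarrow>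
   rf k (\<lambda>xs. F (a xs) (b xs) (c xs))"
  using rf_comp3[of "\<lambda>ys. F (ys!0) (ys!1) (ys!2)" k a b c] by simp
lemma rf_gen4: "rf 4 (\<lambda>ys. F (ys!0) (ys!1) (ys!2) (ys!3)) \<Longrightarrow> rf k a \<Longrightarrow> rf k b \<Longrightarrow> rf k c \<Longrightarrow> rf k d \<Longrightarrow>
   rf k (\<lambda>xs. F (a xs) (b xs) (c xs) (d xs))"
  using rf_comp4[of "\<lambda>ys. F (ys!0) (ys!1) (ys!2) (ys!3)" k a b c d] by simp

fun prim :: "(nat list \<Rightarrow> nat) \<Rightarrow> (nat list \<Rightarrow> nat) \<Rightarrow> nat \<Rightarrow> nat list \<Rightarrow> nat" where
  "prim g h 0 xs = g xs"
| "prim g h (Suc n) xs = h (n # prim g h n xs # xs)"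

lemma rf_prim:
  assumes g: "rf k g" and h: "rf (Suc (Suc k)) h"
    and f0: "\<And>xs. length xs = k \<Longrightarrow> f (0 # xs) = g xs"
    and fS: "\<And>n xs. length xs = k \<Longrightarrow> f (Suc n # xs) = h (n # f (n # xs) # xs)"
  shows "rf (Suc k) f"
proof -
  obtain Mg where Mg: "\<forall>xs. length xs = k \<longrightarrow> ev Mg xs (g xs)" using g unfolding rf_def by blast
  obtain Mh where Mh: "\<forall>xs. length xs = Suc (Suc k) \<longrightarrow> ev Mh xs (h xs)" using h unfolding rf_def by blast
  have *: "ev (Prim Mg Mh) (n # xs) (f (n # xs))" if "length xs = k" for n xs
  proof (induction n)
    case 0 then show ?case using Mg that f0 by (auto intro: ev_Prim0)
  next
    case (Suc n)
    have "ev Mh (n # f (n # xs) # xs) (h (n # f (n # xs) # xs))" using Mh that by simp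
    then show ?case using Suc fS[OF that] by (auto intro: ev_PrimS)
  qed
  show ?thesis unfolding rf_def
  proof (intro exI[of _ "Prim Mg Mh"] allI impI)
    fix ys :: "nat list" assume "length ys = Suc k"
    then obtain n xs where "ys = n # xs" "length xs = k" by (cases ys) auto
    then show "ev (Prim Mg Mh) ys (f ys)" using * by simp
  qed
qed

lemma ev_Mn_rf:
  assumes "\<forall>ys. length ys = Suc k \<longrightarrow> ev M ys (g ys)" "length xs = k" "g (z # xs) = 0"
    "\<forall>y<z. g (y # xs) \<noteq> 0"
  shows "ev (Mn M) xs z"
proof (rule ev_Mn)
  show "ev M (z # xs) 0" using assms(1)[rule_format, of "z # xs"] assms(2,3) by simp
  show "\<forall>y<z. \<exists>v. v \<noteq> 0 \<and> ev M (y # xs) v"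
    using assms(1)[rule_format, of "_ # xs"] assms(2,4) by auto
qed

lemma rf_mn:
  assumes g: "rf (Suc k) g" and ex: "\<And>xs. length xs = k \<Longrightarrow> \<exists>z. g (z # xs) = 0"
  shows "rf k (\<lambda>xs. LEAST z. g (z # xs) = 0)"
proof -
  obtain M where M: "\<forall>ys. length ys = Suc k \<longrightarrow> ev M ys (g ys)" using g unfolding rf_def by blast
  show ?thesis unfolding rf_def
  proof (intro exI[of _ "Mn M"] allI impI)
    fix xs :: "nat list" assume len: "length xs = k"
    show "ev (Mn M) xs (LEAST z. g (z # xs) = 0)"
      by (rule ev_Mn_rf[OF M len]) (use ex[OF len] in \<open>auto intro: LeastI_ex dest: not_less_Least\<close>)
  qed
qed

lemma rf_mnN: "rf kk g \<Longrightarrow> kk = Suc k \<Longrightarrow> (\<And>xs. length xs = k \<Longrightarrow> \<exists>z. g (z # xs) = 0)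
  \<Longrightarrow> rf k (\<lambda>xs. LEAST z. g (z # xs) = 0)"
  using rf_mn[of k g] by blast

lemma rf_succ: "rf k f \<Longrightarrow> rf k (\<lambda>xs. Suc (f xs))"
proof -
  have "rf 1 (\<lambda>ys. Suc (ys ! 0))" unfolding rf_def
  proof (intro exI[of _ Succ] allI impI)
    fix ys :: "nat list" assume "length ys = 1"
    then obtain x where "ys = [x]" by (cases ys) auto
    then show "ev Succ ys (Suc (ys ! 0))" using ev_Succ[of x "[]"] by simp
  qed
  then show "rf k f \<Longrightarrow> rf k (\<lambda>xs. Suc (f xs))" using rf_gen1[of Suc] by blast
qed

lemma rf_const: "rf k (\<lambda>_. c)"
  by (induction c) (auto intro: rf_zero rf_succ)

lemma rf_primN:
  assumes "rf k g" "rf kh h" "kr = Suc k" "kh = Suc (Suc k)"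
    "\<And>xs. length xs = k \<Longrightarrow> f (0 # xs) = g xs"
    "\<And>n xs. length xs = k \<Longrightarrow> f (Suc n # xs) = h (n # f (n # xs) # xs)"
  shows "rf kr f"
  using rf_prim[of k g h f] assms by blast

lemma rf_add2: "rf 2 (\<lambda>ys. ys!0 + ys!1)"
proof -
  have h: "rf 3 (\<lambda>ys. Suc (ys!1))" by (intro rf_succ rf_proj) simp
  have g: "rf 1 (\<lambda>ys. ys!0)" by (intro rf_proj) simp
  show ?thesis by (rule rf_primN[OF g h]) auto
qed

lemma rf_add: "rf k f \<Longrightarrow> rf k g \<Longrightarrow> rf k (\<lambda>xs. f xs + g xs)"
  using rf_gen2[OF rf_add2] by blast

lemma rf_pred1: "rf 1 (\<lambda>ys. ys!0 - 1)"
proof -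
  have h: "rf 2 (\<lambda>ys. ys!0)" by (intro rf_proj) simp
  show ?thesis by (rule rf_primN[OF rf_const h, where k=0]) auto
qed

lemma rf_monus2: "rf 2 (\<lambda>ys. ys!1 - ys!0)"
proof -
  have "rf 3 (\<lambda>ys. ys!1 - 1)" using rf_gen1[OF rf_pred1, of 3 "\<lambda>ys. ys!1"] rf_proj[of 1 3] by simp
  then show ?thesis
    by (rule rf_primN[OF rf_proj[of 0 1, simplified]]) auto
qed

lemma rf_sub: "rf k f \<Longrightarrow> rf k g \<Longrightarrow> rf k (\<lambda>xs. f xs - g xs)"
  using rf_gen2[OF rf_monus2, of k g f] by simp

lemma rf_mult2: "rf 2 (\<lambda>ys. ys!0 * ys!1)"
proof -
  have "rf 3 (\<lambda>ys. ys!2 + ys!1)" by (intro rf_add rf_proj) auto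
  then show ?thesis
    by (rule rf_primN[OF rf_const[of 1 0]]) auto
qed

lemma rf_mult: "rf k f \<Longrightarrow> rf k g \<Longrightarrow> rf k (\<lambda>xs. f xs * g xs)"
  using rf_gen2[OF rf_mult2] by blast

lemma rf_ifz3: "rf 3 (\<lambda>ys. if ys!0 = 0 then ys!1 else ys!2)"
proof -
  have "rf 4 (\<lambda>ys. ys!3)" by (rule rf_proj) auto
  then show ?thesis
    by (rule rf_primN[OF rf_proj[of 0 2, simplified]]) auto
qed

lemma rf_ifz: "rf k c \<Longrightarrow> rf k a \<Longrightarrow> rf k b \<Longrightarrow> rf k (\<lambda>xs. if c xs = 0 then a xs else b xs)"
  using rf_gen3[OF rf_ifz3] by blast

lemma rf_pow1: "rf 1 (\<lambda>ys. 2 ^ ys!0)"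
proof -
  have "rf 2 (\<lambda>ys. ys!1 + ys!1)" by (intro rf_add rf_proj) auto
  then show ?thesis
    by (rule rf_primN[OF rf_const[of 0 1]]) auto
qed

lemma rf_pow2: "rf k f \<Longrightarrow> rf k (\<lambda>xs. 2 ^ f xs)"
  using rf_gen1[OF rf_pow1] by blast

definition rp :: "nat \<Rightarrow> (nat list \<Rightarrow> bool) \<Rightarrow> bool" where
  "rp k P \<longleftrightarrow> rf k (\<lambda>xs. if P xs then 1 else 0)"

lemma rf_If: "rp k P \<Longrightarrow> rf k a \<Longrightarrow> rf k b \<Longrightarrow> rf k (\<lambda>xs. if P xs then a xs else b xs)"
  unfolding rp_def
  by (rule rf_cong[OF rf_ifz[of k "\<lambda>xs. if P xs then 1 else 0" b a]]) auto

lemma rp_le: "rf k f \<Longrightarrow> rf k g \<Longrightarrow> rp k (\<lambda>xs. f xs \<le> g xs)"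
  unfolding rp_def
  by (rule rf_cong[OF rf_ifz[of k "\<lambda>xs. f xs - g xs" "\<lambda>_. 1" "\<lambda>_. 0"]])
     (auto intro: rf_sub rf_const)

lemma rp_less: "rf k f \<Longrightarrow> rf k g \<Longrightarrow> rp k (\<lambda>xs. f xs < g xs)"
  using rp_le[of k "\<lambda>xs. Suc (f xs)" g] rf_succ[of k f] by (simp add: Suc_le_eq)

lemma rp_not: "rp k P \<Longrightarrow> rp k (\<lambda>xs. \<not> P xs)"
  unfolding rp_def
  by (rule rf_cong[OF rf_ifz[of k "\<lambda>xs. if P xs then 1 else 0" "\<lambda>_. 1" "\<lambda>_. 0"]])
     (auto intro: rf_const)

lemma rp_and: "rp k P \<Longrightarrow> rp k Q \<Longrightarrow> rp k (\<lambda>xs. P xs \<and> Q xs)"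
  unfolding rp_def
  by (rule rf_cong[OF rf_If[of k P "\<lambda>xs. if Q xs then 1 else 0" "\<lambda>_. 0"]])
     (auto intro: rf_const simp: rp_def)

lemma rp_or: "rp k P \<Longrightarrow> rp k Q \<Longrightarrow> rp k (\<lambda>xs. P xs \<or> Q xs)"
  unfolding rp_def
  by (rule rf_cong[OF rf_If[of k P "\<lambda>_. 1" "\<lambda>xs. if Q xs then 1 else 0"]])
     (auto intro: rf_const simp: rp_def)

lemma rp_imp: "rp k P \<Longrightarrow> rp k Q \<Longrightarrow> rp k (\<lambda>xs. P xs \<longrightarrow> Q xs)"
proof -
  assume "rp k P" "rp k Q"
  then have "rp k (\<lambda>xs. \<not> P xs \<or> Q xs)" by (intro rp_or rp_not)
  then show ?thesis by simp
qed

lemma rp_eq: "rf k f \<Longrightarrow> rf k g \<Longrightarrow> rp k (\<lambda>xs. f xs = g xs)"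
proof -
  assume "rf k f" "rf k g"
  then have "rp k (\<lambda>xs. f xs \<le> g xs \<and> g xs \<le> f xs)" by (intro rp_and rp_le)
  then show ?thesis by (simp add: order_eq_iff)
qed

lemma rf_div2: "rf 2 (\<lambda>ys. ys!0 div ys!1)"
proof -
  let ?g = "\<lambda>zs::nat list. if zs!2 = 0 then 0 else if zs!1 < Suc (zs!0) * zs!2 then 0 else (1::nat)"
  have g: "rf 3 ?g"
    by (intro rf_If rp_eq rp_less rf_mult rf_succ rf_proj rf_const) auto
  have "rf 2 (\<lambda>xs. LEAST z. ?g (z # xs) = 0)"
  proof (rule rf_mnN[OF g])
    fix xs :: "nat list" assume "length xs = 2"
    show "\<exists>z. ?g (z # xs) = 0" by (rule exI[of _ "xs ! 0"]) (cases "xs ! 1", auto)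
  qed simp
  then show ?thesis
  proof (rule rf_cong)
    fix xs :: "nat list" assume "length xs = 2"
    show "(LEAST z. ?g (z # xs) = 0) = xs!0 div xs!1"
    proof (cases "xs!1 = 0")
      case True then show ?thesis by simp
    next
      case False
      show ?thesis
      proof (rule Least_equality)
        show "?g ((xs!0 div xs!1) # xs) = 0" using False
          by simp (metis dividend_less_div_times mult.commute mult_Suc zero_less_iff_neq_zero add.commute)
      next
        fix y assume "?g (y # xs) = 0"
        then have "xs!0 < Suc y * xs!1" using False by (auto split: if_splits)
        then show "xs!0 div xs!1 \<le> y"
          by (metis less_Suc_eq_le less_mult_imp_div_less mult.commute)
      qed
    qed
  qed
qed

lemma rf_div: "rf k f \<Longrightarrow> rf k g \<Longrightarrow> rf k (\<lambda>xs. f xs div g xs)"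
  using rf_gen2[OF rf_div2] by blast

lemma rf_mod: "rf k f \<Longrightarrow> rf k g \<Longrightarrow> rf k (\<lambda>xs. f xs mod g xs)"
proof -
  assume f: "rf k f" and g: "rf k g"
  have "rf k (\<lambda>xs. f xs - g xs * (f xs div g xs))" by (intro rf_sub rf_mult rf_div f g)
  then show ?thesis by (rule rf_cong) (simp add: minus_mult_div_eq_mod)
qed

lemma rf_tl: "rf k f \<Longrightarrow> rf (Suc k) (\<lambda>ys. f (tl ys))"
proof -
  assume f: "rf k f"
  have la: "list_all (rf (Suc k)) (map (\<lambda>j ys. ys ! j) [1..<Suc k])"
    by (auto simp: list_all_iff intro: rf_proj)
  have len: "length (map (\<lambda>j ys. ys ! j) [1..<Suc k]) = k" by simp
  have "rf (Suc k) (\<lambda>ys. f (map (\<lambda>g. g ys) (map (\<lambda>j ys. ys ! j) [1..<Suc k])))"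
    by (rule rf_comp[OF _ la]) (simp only: len f)
  then show ?thesis
  proof (rule rf_cong)
    fix ys :: "nat list" assume "length ys = Suc k"
    then have "map (\<lambda>g. g ys) (map (\<lambda>j ys. ys ! j) [1..<Suc k]) = tl ys"
      by (simp add: list_eq_iff_nth_eq nth_tl del: upt_Suc)
    then show "f (map (\<lambda>g. g ys) (map (\<lambda>j ys. ys ! j) [1..<Suc k])) = f (tl ys)" by simp
  qed
qed

lemma rf_subst_hd: "rf (Suc k) F \<Longrightarrow> rf k b \<Longrightarrow> rf k (\<lambda>xs. F (b xs # xs))"
proof -
  assume F: "rf (Suc k) F" and b: "rf k b"
  have la: "list_all (rf k) (b # map (\<lambda>j xs. xs ! j) [0..<k])"
    using b by (auto simp: list_all_iff intro: rf_proj)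
  have len: "length (b # map (\<lambda>j xs. xs ! j) [0..<k]) = Suc k" by simp
  have "rf k (\<lambda>xs. F (map (\<lambda>g. g xs) (b # map (\<lambda>j xs. xs ! j) [0..<k])))"
    by (rule rf_comp[OF _ la]) (simp only: len F)
  then show ?thesis
  proof (rule rf_cong)
    fix xs :: "nat list" assume "length xs = k"
    then have "map (\<lambda>g. g xs) (b # map (\<lambda>j xs. xs ! j) [0..<k]) = b xs # xs"
      by (simp add: list_eq_iff_nth_eq nth_Cons split: nat.split)
    then show "F (map (\<lambda>g. g xs) (b # map (\<lambda>j xs. xs ! j) [0..<k])) = F (b xs # xs)" by simp
  qed
qed

lemma rf_sum: "rf (Suc k) g \<Longrightarrow> rf k b \<Longrightarrow> rf k (\<lambda>xs. \<Sum>i<b xs. g (i # xs))"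
proof -
  assume g: "rf (Suc k) g" and b: "rf k b"
  have la: "list_all (rf (Suc (Suc k))) ((\<lambda>ys. ys!0) # map (\<lambda>j ys. ys ! (j+2)) [0..<k])"
    by (auto simp: list_all_iff intro: rf_proj)
  have len: "length ((\<lambda>ys. ys!0) # map (\<lambda>j ys. ys ! (j+2)) [0..<k]) = Suc k" by simp
  have "rf (Suc (Suc k)) (\<lambda>ys. g (map (\<lambda>f. f ys) ((\<lambda>ys. ys!0) # map (\<lambda>j ys. ys ! (j+2)) [0..<k])))"
    by (rule rf_comp[OF _ la]) (simp only: len g)
  then have g2: "rf (Suc (Suc k)) (\<lambda>ys. g (ys!0 # drop 2 ys))"
  proof (rule rf_cong)
    fix ys :: "nat list" assume "length ys = Suc (Suc k)"
    then have "map (\<lambda>f. f ys) ((\<lambda>ys. ys!0) # map (\<lambda>j ys. ys ! (j+2)) [0..<k]) = ys!0 # drop 2 ys"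
      by (simp add: list_eq_iff_nth_eq nth_Cons split: nat.split)
    then show "g (map (\<lambda>f. f ys) ((\<lambda>ys. ys!0) # map (\<lambda>j ys. ys ! (j+2)) [0..<k])) = g (ys!0 # drop 2 ys)"
      by simp
  qed
  have h: "rf (Suc (Suc k)) (\<lambda>ys. ys!1 + g (ys!0 # drop 2 ys))"
    by (rule rf_add[OF rf_proj g2]) simp
  have "rf (Suc k) (\<lambda>ys. \<Sum>i<hd ys. g (i # tl ys))"
    by (rule rf_prim[OF rf_const h]) auto
  from rf_subst_hd[OF this b] show ?thesis by simp
qed

lemma rp_bex: "rp (Suc k) P \<Longrightarrow> rf k b \<Longrightarrow> rp k (\<lambda>xs. \<exists>i<b xs. P (i # xs))"
proof -
  assume P: "rp (Suc k) P" and b: "rf k b"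
  have "rf k (\<lambda>xs. \<Sum>i<b xs. (if P (i # xs) then 1 else 0))"
    using rf_sum[OF P[unfolded rp_def] b] .
  then have "rp k (\<lambda>xs. 0 < (\<Sum>i<b xs. (if P (i # xs) then 1 else 0::nat)))"
    by (intro rp_less rf_const)
  then show ?thesis unfolding rp_def
    by (rule rf_cong) (auto simp: sum_pos2)
qed

lemma rp_ball: "rp (Suc k) P \<Longrightarrow> rf k b \<Longrightarrow> rp k (\<lambda>xs. \<forall>i<b xs. P (i # xs))"
proof -
  assume P: "rp (Suc k) P" and b: "rf k b"
  have "rp k (\<lambda>xs. \<not> (\<exists>i<b xs. \<not> P (i # xs)))"
    by (intro rp_not rp_bex[OF rp_not[OF P] b])
  then show ?thesis by simp
qed

lemmas rf_intros = rf_const rf_proj rf_succ rf_add rf_sub rf_mult rf_div rf_mod rf_pow2 rf_If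
  rp_le rp_less rp_eq rp_not rp_and rp_or rp_imp



lemma rp_ballN: "rp kk P \<Longrightarrow> kk = Suc k \<Longrightarrow> rf k b \<Longrightarrow> rp k (\<lambda>xs. \<forall>i<b xs. P (i # xs))"
  using rp_ball[of k P b] by blast
lemma rp_bexN: "rp kk P \<Longrightarrow> kk = Suc k \<Longrightarrow> rf k b \<Longrightarrow> rp k (\<lambda>xs. \<exists>i<b xs. P (i # xs))"
  using rp_bex[of k P b] by blast

lemma rp_cong: "rp k P \<Longrightarrow> (\<And>xs. length xs = k \<Longrightarrow> P xs = Q xs) \<Longrightarrow> rp k Q"
  unfolding rp_def by (erule rf_cong) simp

definition bitn :: "nat \<Rightarrow> nat \<Rightarrow> nat" where "bitn m i = m div 2 ^ i mod 2"
definition idx :: "nat \<Rightarrow> nat \<Rightarrow> nat \<Rightarrow> nat" where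
  "idx n i j = (\<Sum>t<i - 1. n - Suc t) + (j - i - 1)"
definition adjn :: "nat \<Rightarrow> nat \<Rightarrow> nat \<Rightarrow> nat \<Rightarrow> nat" where
  "adjn n m i j = (if i < j then bitn m (idx n i j) else if j < i then bitn m (idx n j i) else 0)"
definition badp :: "nat \<Rightarrow> nat \<Rightarrow> bool" where
  "badp n m \<longleftrightarrow> m = 2 ^ (n * (n - 1) div 2) - 1 \<or>
     (\<exists>u<Suc n. \<exists>v<Suc n. 1 \<le> u \<and> u < v \<and>
        (\<forall>w<Suc n. 1 \<le> w \<longrightarrow> w \<noteq> u \<longrightarrow> w \<noteq> v \<longrightarrow> \<not> (adjn n m u w = 1 \<and> adjn n m v w = 1)))"
definition cnt :: "nat \<Rightarrow> nat \<Rightarrow> nat" where "cnt n t = (\<Sum>m<t. if badp n m then 1 else 0)"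
definition decs :: "nat \<Rightarrow> nat" where "decs y = (LEAST s. y < Suc s * Suc (Suc s) div 2)"
definition decn :: "nat \<Rightarrow> nat" where "decn y = y - decs y * Suc (decs y) div 2"

lemma rf_bitn: "rf k a \<Longrightarrow> rf k b \<Longrightarrow> rf k (\<lambda>xs. bitn (a xs) (b xs))"
  unfolding bitn_def by (intro rf_mod rf_div rf_pow2 rf_const)

lemma rf_idx3: "rf 3 (\<lambda>xs. idx (xs!0) (xs!1) (xs!2))"
proof -
  have "rf 3 (\<lambda>xs. \<Sum>i<xs!1 - 1. (\<lambda>ys. ys!1 - Suc (ys!0)) (i#xs))"
    by (rule rf_sum) (intro rf_sub rf_succ rf_proj rf_const; simp)+
  then have "rf 3 (\<lambda>xs. (\<Sum>i<xs!1 - 1. (\<lambda>ys. ys!1 - Suc (ys!0)) (i#xs)) + (xs!2 - xs!1 - 1))"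
    by (intro rf_add rf_sub rf_proj rf_const; simp)
  then show ?thesis unfolding idx_def by simp
qed

lemma rf_idx: "rf k a \<Longrightarrow> rf k b \<Longrightarrow> rf k c \<Longrightarrow> rf k (\<lambda>xs. idx (a xs) (b xs) (c xs))"
  by (rule rf_gen3[OF rf_idx3])

lemma rf_adjn4: "rf 4 (\<lambda>xs. adjn (xs!0) (xs!1) (xs!2) (xs!3))"
  unfolding adjn_def
  by (intro rf_If rp_less rf_bitn rf_idx rf_proj rf_const; simp)

lemma rf_adjn: "rf k a \<Longrightarrow> rf k b \<Longrightarrow> rf k c \<Longrightarrow> rf k d \<Longrightarrow> rf k (\<lambda>xs. adjn (a xs) (b xs) (c xs) (d xs))"
  by (rule rf_gen4[OF rf_adjn4])

lemma rp_badp2: "rp 2 (\<lambda>xs. badp (xs!0) (xs!1))"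
proof -
  have p3: "rp 5 (\<lambda>ws. 1 \<le> ws!0 \<longrightarrow> ws!0 \<noteq> ws!2 \<longrightarrow> ws!0 \<noteq> ws!1 \<longrightarrow>
      \<not> (adjn (ws!3) (ws!4) (ws!2) (ws!0) = 1 \<and> adjn (ws!3) (ws!4) (ws!1) (ws!0) = 1))"
    by (intro rp_imp rp_not rp_and rp_le rp_eq rf_adjn rf_proj rf_const; simp)
  have p2: "rp 4 (\<lambda>zs. 1 \<le> zs!1 \<and> zs!1 < zs!0 \<and> (\<forall>w<Suc (zs!2). (\<lambda>ws. 1 \<le> ws!0 \<longrightarrow> ws!0 \<noteq> ws!2 \<longrightarrow> ws!0 \<noteq> ws!1 \<longrightarrow>
      \<not> (adjn (ws!3) (ws!4) (ws!2) (ws!0) = 1 \<and> adjn (ws!3) (ws!4) (ws!1) (ws!0) = 1)) (w # zs)))"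
    by (intro rp_and rp_le rp_less rp_ballN[OF p3] rf_succ rf_proj rf_const; simp)
  have p1: "rp 3 (\<lambda>ys. \<exists>v<Suc (ys!1). (\<lambda>zs. 1 \<le> zs!1 \<and> zs!1 < zs!0 \<and> (\<forall>w<Suc (zs!2). (\<lambda>ws. 1 \<le> ws!0 \<longrightarrow> ws!0 \<noteq> ws!2 \<longrightarrow> ws!0 \<noteq> ws!1 \<longrightarrow>
      \<not> (adjn (ws!3) (ws!4) (ws!2) (ws!0) = 1 \<and> adjn (ws!3) (ws!4) (ws!1) (ws!0) = 1)) (w # zs))) (v # ys))"
    by (intro rp_bexN[OF p2] rf_succ rf_proj; simp)
  have p0: "rp 2 (\<lambda>xs. xs!1 = 2 ^ (xs!0 * (xs!0 - 1) div 2) - 1 \<or> (\<exists>u<Suc (xs!0). (\<lambda>ys. \<exists>v<Suc (ys!1). (\<lambda>zs. 1 \<le> zs!1 \<and> zs!1 < zs!0 \<and> (\<forall>w<Suc (zs!2). (\<lambda>ws. 1 \<le> ws!0 \<longrightarrow> ws!0 \<noteq> ws!2 \<longrightarrow> ws!0 \<noteq> ws!1 \<longrightarrow>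
      \<not> (adjn (ws!3) (ws!4) (ws!2) (ws!0) = 1 \<and> adjn (ws!3) (ws!4) (ws!1) (ws!0) = 1)) (w # zs))) (v # ys)) (u # xs)))"
    by (intro rp_or rp_eq rp_bexN[OF p1] rf_sub rf_pow2 rf_div rf_mult rf_succ rf_proj rf_const; simp)
  show ?thesis
    by (rule rp_cong[OF p0]) (simp add: badp_def numeral_eq_Suc)
qed

lemma rp_badp: "rf k a \<Longrightarrow> rf k b \<Longrightarrow> rp k (\<lambda>xs. badp (a xs) (b xs))"
  unfolding rp_def by (rule rf_gen2[OF rp_badp2[unfolded rp_def]])

lemma rf_cnt2: "rf 2 (\<lambda>xs. cnt (xs!0) (xs!1))"
proof -
  have "rf 2 (\<lambda>xs. \<Sum>i<xs!1. (\<lambda>ys. if badp (ys!1) (ys!0) then 1 else 0) (i#xs))"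
    by (rule rf_sum) (intro rf_If rp_badp rf_proj rf_const; simp)+
  then show ?thesis by (rule rf_cong) (simp add: cnt_def)
qed

lemma rf_cnt: "rf k a \<Longrightarrow> rf k b \<Longrightarrow> rf k (\<lambda>xs. cnt (a xs) (b xs))"
  by (rule rf_gen2[OF rf_cnt2])

lemma decs_ex: "y < Suc y * Suc (Suc y) div 2"
proof -
  have "(2 * Suc y) div 2 \<le> Suc y * Suc (Suc y) div 2" by (rule div_le_mono) simp
  then show ?thesis by simp
qed

lemma rf_decs1: "rf 1 (\<lambda>xs. decs (xs!0))"
proof -
  have g: "rf 2 (\<lambda>ys. if ys!1 < Suc (ys!0) * Suc (Suc (ys!0)) div 2 then 0 else (1::nat))"
    by (intro rf_If rp_less rf_div rf_mult rf_succ rf_proj rf_const; simp)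
  have "rf 1 (\<lambda>xs. LEAST z. (\<lambda>ys. if ys!1 < Suc (ys!0) * Suc (Suc (ys!0)) div 2 then 0 else (1::nat)) (z # xs) = 0)"
  proof (rule rf_mnN[OF g])
    fix xs :: "nat list" assume "length xs = 1"
    show "\<exists>z. (\<lambda>ys. if ys!1 < Suc (ys!0) * Suc (Suc (ys!0)) div 2 then 0 else (1::nat)) (z # xs) = 0"
      using decs_ex[of "xs!0"] by (intro exI[of _ "xs!0"]) simp
  qed simp
  then show ?thesis by (rule rf_cong) (simp add: decs_def)
qed

lemma rf_decn: "rf k a \<Longrightarrow> rf k (\<lambda>xs. decn (a xs))"
proof -
  have "rf 1 (\<lambda>xs. xs!0 - decs (xs!0) * Suc (decs (xs!0)) div 2)"
    by (intro rf_sub rf_div rf_mult rf_succ rf_gen1[OF rf_decs1] rf_proj rf_const; simp)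
  then have "rf 1 (\<lambda>xs. decn (xs!0))" by (simp add: decn_def)
  then show "rf k a \<Longrightarrow> rf k (\<lambda>xs. decn (a xs))" by (rule rf_gen1)
qed

lemma machine:
  "\<exists>M. \<forall>a y z. a < cnt (decn y) (Suc z) \<and> (\<forall>z'<z. \<not> a < cnt (decn y) (Suc z')) \<longrightarrow>
      ev M [a, y] (2 ^ (decn y * (decn y - 1) div 2) - 1 + z)"
proof -
  have G: "rf 3 (\<lambda>ys. if ys!1 < cnt (decn (ys!2)) (Suc (ys!0)) then 0 else (1::nat))"
    by (intro rf_If rp_less rf_cnt rf_decn rf_succ rf_proj rf_const; simp)
  have H: "rf 3 (\<lambda>ys. 2 ^ (decn (ys!2) * (decn (ys!2) - 1) div 2) - 1 + ys!0)"
    by (intro rf_add rf_sub rf_pow2 rf_div rf_mult rf_decn rf_proj rf_const; simp)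
  obtain MG where MG: "\<forall>ys. length ys = 3 \<longrightarrow> ev MG ys (if ys!1 < cnt (decn (ys!2)) (Suc (ys!0)) then 0 else 1)"
    using G unfolding rf_def by blast
  obtain MH where MH: "\<forall>ys. length ys = 3 \<longrightarrow> ev MH ys (2 ^ (decn (ys!2) * (decn (ys!2) - 1) div 2) - 1 + ys!0)"
    using H unfolding rf_def by blast
  show ?thesis
  proof (intro exI[of _ "Comp MH [Mn MG, Proj 0, Proj 1]"] allI impI)
    fix a y z assume az: "a < cnt (decn y) (Suc z) \<and> (\<forall>z'<z. \<not> a < cnt (decn y) (Suc z'))"
    have "ev (Mn MG) [a, y] z"
    proof (rule ev_Mn_rf[where k=2 and g="\<lambda>ys. if ys!1 < cnt (decn (ys!2)) (Suc (ys!0)) then 0 else 1"])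
      show "\<forall>ys. length ys = Suc 2 \<longrightarrow> ev MG ys (if ys!1 < cnt (decn (ys!2)) (Suc (ys!0)) then 0 else 1)"
        using MG by simp
    qed (use az in auto)
    moreover have "ev (Proj 0) [a, y] a" using ev_Proj[of 0 "[a,y]"] by simp
    moreover have "ev (Proj 1) [a, y] y" using ev_Proj[of 1 "[a,y]"] by simp
    ultimately have "list_all2 (\<lambda>g v. ev g [a, y] v) [Mn MG, Proj 0, Proj 1] [z, a, y]" by simp
    moreover have "ev MH [z, a, y] (2 ^ (decn y * (decn y - 1) div 2) - 1 + z)"
      using MH[rule_format, of "[z,a,y]"] by simp
    ultimately show "ev (Comp MH [Mn MG, Proj 0, Proj 1]) [a, y] (2 ^ (decn y * (decn y - 1) div 2) - 1 + z)"
      by (rule ev_Comp)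
  qed
qed



fun bval :: "bool list \<Rightarrow> nat" where
  "bval [] = 0"
| "bval (b # bs) = (if b then 1 else 0) + 2 * bval bs"

lemma nat_of_bl_bval: "nat_of_bl bs = 2 ^ length bs - 1 + bval bs"
proof (induction bs)
  case Nil then show ?case by simp
next
  case (Cons b bs)
  have "1 \<le> (2::nat) ^ length bs" by simp
  then show ?case using Cons by (cases b; simp; linarith)
qed

lemma bval_less: "bval bs < 2 ^ length bs"
  by (induction bs) auto

lemma bitn_Suc: "bitn m (Suc k) = bitn (m div 2) k"
  by (simp add: bitn_def div_mult2_eq)

lemma bitn_0: "bitn m 0 = m mod 2"
  by (simp add: bitn_def)

lemma bitn_bval: "k < length bs \<Longrightarrow> bitn (bval bs) k = (if bs ! k then 1 else 0)"
proof (induction bs arbitrary: k)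
  case Nil then show ?case by simp
next
  case (Cons b bs)
  show ?case
  proof (cases k)
    case 0 then show ?thesis by (simp add: bitn_0)
  next
    case (Suc k')
    have "bval (b # bs) div 2 = bval bs" by simp
    then show ?thesis using Cons Suc by (simp add: bitn_Suc)
  qed
qed

lemma bval_all: "(\<forall>k<length bs. bs ! k) \<Longrightarrow> bval bs = 2 ^ length bs - 1"
proof (induction bs)
  case Nil then show ?case by simp
next
  case (Cons b bs)
  then have "b" "\<forall>k<length bs. bs ! k" by (auto dest: spec[of _ 0] spec[of _ "Suc _"])
  moreover have "1 \<le> (2::nat) ^ length bs" by simp
  ultimately show ?case using Cons.IH by (simp; linarith)
qed

lemma bl_exists: "a < 2 ^ L \<Longrightarrow> \<exists>p. nat_of_bl p = a \<and> length p \<le> L"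
proof (induction L arbitrary: a)
  case 0 then show ?case by (intro exI[of _ "[]"]) simp
next
  case (Suc L)
  show ?case
  proof (cases "a = 0")
    case True then show ?thesis by (intro exI[of _ "[]"]) simp
  next
    case False
    show ?thesis
    proof (cases "odd a")
      case True
      have "(a - 1) div 2 < 2 ^ L" using Suc.prems by simp
      then obtain p where p: "nat_of_bl p = (a - 1) div 2" "length p \<le> L" using Suc.IH by blast
      show ?thesis using p True False
        by (intro exI[of _ "False # p"]) (auto elim!: oddE)
    next
      case ev: False
      have "(a - 2) div 2 < 2 ^ L" using Suc.prems by simp
      then obtain p where p: "nat_of_bl p = (a - 2) div 2" "length p \<le> L" using Suc.IH by blast
      show ?thesis using p ev False
        by (intro exI[of _ "True # p"]) (auto elim!: evenE)
    qed
  qed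
qed

lemma bits_eq: "m1 < 2 ^ N \<Longrightarrow> m2 < 2 ^ N \<Longrightarrow> (\<forall>i<N. bitn m1 i = bitn m2 i) \<Longrightarrow> m1 = m2"
proof (induction N arbitrary: m1 m2)
  case 0 then show ?case by simp
next
  case (Suc N)
  have "m1 div 2 = m2 div 2"
    using Suc.prems by (intro Suc.IH) (auto simp: bitn_Suc[symmetric])
  moreover have "m1 mod 2 = m2 mod 2" using Suc.prems(3)[rule_format, of 0] by (simp add: bitn_0)
  ultimately show ?case by (metis div_mult_mod_eq)
qed

definition LL :: "nat \<Rightarrow> nat \<Rightarrow> (nat \<times> nat) list" where
  "LL n s = concat (map (\<lambda>i. map (\<lambda>j. (i, j)) [Suc i..<n+1]) [s..<n+1])"

lemma edge_list_LL: "edge_list n = LL n 1"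
  by (simp add: edge_list_def LL_def)

lemma LL_Suc: "s \<le> n \<Longrightarrow> LL n s = map (\<lambda>j. (s, j)) [Suc s..<n+1] @ LL n (Suc s)"
  by (simp add: LL_def upt_conv_Cons)

lemma LL_nth: "s \<le> i \<Longrightarrow> i < j \<Longrightarrow> j \<le> n \<Longrightarrow>
  (\<Sum>t\<in>{s..<i}. n - t) + (j - i - 1) < length (LL n s) \<and>
  LL n s ! ((\<Sum>t\<in>{s..<i}. n - t) + (j - i - 1)) = (i, j)"
proof (induction "i - s" arbitrary: s)
  case 0
  then have si: "s = i" by simp
  have "LL n s = map (\<lambda>j. (s, j)) [Suc s..<n+1] @ LL n (Suc s)" using 0 by (intro LL_Suc) simp
  moreover have "j - i - 1 < length (map (\<lambda>j. (s, j)) [Suc s..<n+1])" using 0 si by (simp del: upt_Suc)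
  ultimately show ?case using 0 si by (simp add: nth_append del: upt_Suc)
next
  case (Suc d)
  then have sn: "s < i" "s \<le> n" by auto
  have eq: "LL n s = map (\<lambda>j. (s, j)) [Suc s..<n+1] @ LL n (Suc s)" using sn by (intro LL_Suc)
  have sum: "(\<Sum>t\<in>{s..<i}. n - t) = (n - s) + (\<Sum>t\<in>{Suc s..<i}. n - t)"
    using sn by (simp add: sum.atLeast_Suc_lessThan)
  have IH: "(\<Sum>t\<in>{Suc s..<i}. n - t) + (j - i - 1) < length (LL n (Suc s)) \<and>
    LL n (Suc s) ! ((\<Sum>t\<in>{Suc s..<i}. n - t) + (j - i - 1)) = (i, j)"
    using Suc by (intro Suc.hyps) auto
  have len: "length (map (\<lambda>j. (s, j)) [Suc s..<n+1]) = n - s" by (simp del: upt_Suc)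
  show ?case unfolding eq sum using IH len by (simp add: nth_append add.assoc del: upt_Suc)
qed

lemma length_LL: "length (LL n s) = (\<Sum>t\<in>{s..<n+1}. n - t)"
proof (induction "n + 1 - s" arbitrary: s)
  case 0
  then have "LL n s = []" by (simp add: LL_def)
  then show ?case using 0 by simp
next
  case (Suc d)
  then have sn: "s \<le> n" by simp
  have "length (LL n s) = (n - s) + length (LL n (Suc s))"
    using LL_Suc[OF sn] by (simp del: upt_Suc)
  also have "length (LL n (Suc s)) = (\<Sum>t\<in>{Suc s..<n+1}. n - t)"
    using Suc by (intro Suc.hyps) simp
  also have "(n - s) + (\<Sum>t\<in>{Suc s..<n+1}. n - t) = (\<Sum>t\<in>{s..<n+1}. n - t)"
  proof -
    have "s < n + 1" using sn by simp
    from sum.atLeast_Suc_lessThan[OF this, of "\<lambda>t. n - t"] show ?thesis by (rule sym)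
  qed
  finally show ?case .
qed

lemma sum_rev_aux: "(\<Sum>t\<in>{1..<Suc n}. n - t) = (\<Sum>t<n. t)"
proof (induction n)
  case 0 then show ?case by simp
next
  case (Suc n)
  have "(\<Sum>t\<in>{1..<Suc (Suc n)}. Suc n - t) = (\<Sum>t\<in>{1..<Suc n}. Suc n - t) + (Suc n - Suc n)"
    by (rule sum.atLeastLessThan_Suc) simp
  also have "(\<Sum>t\<in>{1..<Suc n}. Suc n - t) = (\<Sum>t\<in>{1..<Suc n}. (n - t) + 1)"
    by (intro sum.cong) auto
  also have "\<dots> = (\<Sum>t\<in>{1..<Suc n}. n - t) + n" by (simp only: sum.distrib) simp
  finally show ?case using Suc by simp
qed

lemma length_edge_list: "length (edge_list n) = n * (n - 1) div 2"
proof -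
  have "length (edge_list n) = (\<Sum>t<n. t)"
    using length_LL[of n 1] sum_rev_aux[of n] by (simp add: edge_list_LL)
  also have "\<dots> = n * (n - 1) div 2" by (simp add: Sum_Ico_nat atLeast0LessThan[symmetric])
  finally show ?thesis .
qed

lemma idx_alt: "1 \<le> i \<Longrightarrow> idx n i j = (\<Sum>t\<in>{1..<i}. n - t) + (j - i - 1)"
proof -
  assume i: "1 \<le> i"
  then obtain i' where i': "i = Suc i'" by (cases i) auto
  have "(\<Sum>t\<in>{Suc 0..<Suc i'}. n - t) = (\<Sum>t\<in>{0..<i'}. n - Suc t)"
    by (rule sum.shift_bounds_Suc_ivl)
  then show ?thesis by (simp add: idx_def i' atLeast0LessThan)
qed

lemma idx_props: "1 \<le> i \<Longrightarrow> i < j \<Longrightarrow> j \<le> n \<Longrightarrow>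
   idx n i j < n * (n - 1) div 2 \<and> edge_list n ! idx n i j = (i, j)"
proof -
  assume a: "1 \<le> i" "i < j" "j \<le> n"
  have "length (LL n 1) = n * (n - 1) div 2" using length_edge_list[of n] by (simp add: edge_list_LL)
  then show ?thesis using LL_nth[OF a] a by (simp add: idx_alt edge_list_LL)
qed

lemma set_edge_list: "set (edge_list n) \<subseteq> {(i, j). 1 \<le> i \<and> i < j \<and> j \<le> n}"
  by (auto simp: edge_list_def)

lemma length_E: "length (E n G) = n * (n - 1) div 2"
  by (simp add: E_def length_edge_list)

lemma E_nth: "k < n * (n - 1) div 2 \<Longrightarrow> E n G ! k = (case edge_list n ! k of (i, j) \<Rightarrow> {i, j} \<in> G)"
  by (simp add: E_def length_edge_list)

lemma adjn_E:
  assumes "1 \<le> u" "u \<le> n" "1 \<le> w" "w \<le> n" "u \<noteq> w"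
  shows "adjn n (bval (E n G)) u w = (if {u, w} \<in> G then 1 else 0)"
proof (cases "u < w")
  case True
  with assms idx_props[of u w n] show ?thesis
    by (simp add: adjn_def bitn_bval length_E E_nth)
next
  case False
  then have "w < u" using assms by simp
  with assms idx_props[of w u n] show ?thesis
    by (simp add: adjn_def bitn_bval length_E E_nth insert_commute)
qed



lemma walk3: "walk n G [u, w, v]" if "u \<in> {1..n}" "w \<in> {1..n}" "v \<in> {1..n}" "{u, w} \<in> G" "{w, v} \<in> G"
  unfolding walk_def
proof (intro conjI allI impI)
  fix i assume "Suc i < length [u, w, v]"
  then have "i = 0 \<or> i = 1" by auto
  then show "{[u, w, v] ! i, [u, w, v] ! Suc i} \<in> G" using that by auto
qed (use that in auto)

lemma walk1: "walk n G [u]" if "u \<in> {1..n}"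
  unfolding walk_def using that by auto

lemma good_diam:
  assumes n2: "2 \<le> n" and nb: "\<not> badp n (bval (E n G))"
  shows "diameter n G = 2"
proof -
  let ?m = "bval (E n G)"
  have common: "\<exists>w. w \<in> {1..n} \<and> {u, w} \<in> G \<and> {v, w} \<in> G"
    if uv: "1 \<le> u" "u < v" "v \<le> n" for u v
  proof -
    have "\<exists>w<Suc n. 1 \<le> w \<and> w \<noteq> u \<and> w \<noteq> v \<and> adjn n ?m u w = 1 \<and> adjn n ?m v w = 1"
    proof (rule ccontr)
      assume na: "\<not> ?thesis"
      have "\<forall>w<Suc n. 1 \<le> w \<longrightarrow> w \<noteq> u \<longrightarrow> w \<noteq> v \<longrightarrow> \<not> (adjn n ?m u w = 1 \<and> adjn n ?m v w = 1)"
        using na by auto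
      then have "badp n ?m" unfolding badp_def
        apply (intro disjI2)
        apply (rule exI[of _ u], rule conjI)
         apply (use uv in simp)
        apply (rule exI[of _ v], rule conjI)
         apply (use uv in simp)
        apply (use uv in simp)
        done
      then show False using nb by simp
    qed
    then obtain w where w: "w < Suc n" "1 \<le> w" "w \<noteq> u" "w \<noteq> v"
      "adjn n ?m u w = 1" "adjn n ?m v w = 1" by blast
    have a1: "adjn n ?m u w = (if {u, w} \<in> G then 1 else 0)" by (rule adjn_E) (use uv w(1-4) in auto)
    have a2: "adjn n ?m v w = (if {v, w} \<in> G then 1 else 0)" by (rule adjn_E) (use uv w(1-4) in auto)
    have "{u, w} \<in> G"
    proof (rule ccontr)
      assume "{u, w} \<notin> G"
      with a1 have "adjn n ?m u w = 0" by simp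
      with w(5) show False by simp
    qed
    moreover have "{v, w} \<in> G"
    proof (rule ccontr)
      assume "{v, w} \<notin> G"
      with a2 have "adjn n ?m v w = 0" by simp
      with w(6) show False by simp
    qed
    ultimately show ?thesis using w by auto
  qed
  have "\<exists>i j. 1 \<le> i \<and> i < j \<and> j \<le> n \<and> {i, j} \<notin> G"
  proof (rule ccontr)
    assume "\<not> ?thesis"
    then have all: "{i, j} \<in> G" if "1 \<le> i" "i < j" "j \<le> n" for i j using that by blast
    have "\<forall>k<length (E n G). E n G ! k"
    proof (intro allI impI)
      fix k assume k: "k < length (E n G)"
      then have kN: "k < n * (n - 1) div 2" by (simp add: length_E)
      obtain i j where ij: "edge_list n ! k = (i, j)" by fastforce
      have "(i, j) \<in> set (edge_list n)" using kN ij by (metis length_edge_list nth_mem)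
      then have "1 \<le> i" "i < j" "j \<le> n" using set_edge_list[of n] by auto
      then show "E n G ! k" using E_nth[OF kN] ij all by simp
    qed
    then have "?m = 2 ^ (n * (n - 1) div 2) - 1" using bval_all length_E by metis
    then show False using nb unfolding badp_def by simp
  qed
  then obtain i j where ij: "1 \<le> i" "i < j" "j \<le> n" "{i, j} \<notin> G" by blast
  have le2: "gdist n G u v \<le> 2" if uv: "u \<in> {1..n}" "v \<in> {1..n}" for u v
  proof (cases "u = v")
    case True
    have "0 \<in> {k. \<exists>xs. walk n G xs \<and> hd xs = u \<and> last xs = v \<and> length xs = Suc k}"
      using walk1[OF uv(1)] True by force
    then show ?thesis unfolding gdist_def by (rule INF_lower2) (simp add: zero_enat_def[symmetric])
  next
    case False
    obtain w where w: "w \<in> {1..n}" "{u, w} \<in> G" "{v, w} \<in> G"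
    proof (cases "u < v")
      case True then show ?thesis using common[of u v] uv that by auto
    next
      case f: False then have "v < u" using False by simp
      then show ?thesis using common[of v u] uv that by auto
    qed
    have "walk n G [u, w, v]" using w uv by (intro walk3) (auto simp: insert_commute)
    then have "2 \<in> {k. \<exists>xs. walk n G xs \<and> hd xs = u \<and> last xs = v \<and> length xs = Suc k}"
      by (intro CollectI exI[of _ "[u, w, v]"]) simp
    then show ?thesis unfolding gdist_def by (rule INF_lower2) (simp add: numeral_eq_enat)
  qed
  have ge2: "2 \<le> gdist n G i j"
    unfolding gdist_def
  proof (rule INF_greatest)
    fix k assume "k \<in> {k. \<exists>xs. walk n G xs \<and> hd xs = i \<and> last xs = j \<and> length xs = Suc k}"
    then obtain xs where xs: "walk n G xs" "hd xs = i" "last xs = j" "length xs = Suc k" by blast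
    show "2 \<le> enat k"
    proof (rule ccontr)
      assume "\<not> 2 \<le> enat k"
      then have "k = 0 \<or> k = 1" by (cases k) (auto simp: numeral_eq_enat one_enat_def)
      then show False
      proof
        assume "k = 0"
        then obtain a where "xs = [a]" using xs(4) by (cases xs) auto
        then show False using xs ij by simp
      next
        assume "k = 1"
        then obtain a b where ab: "xs = [a, b]" using xs(4)
          by (cases xs; cases "tl xs") auto
        then have "{a, b} \<in> G" using xs(1) unfolding walk_def by (auto dest: spec[of _ 0])
        then show False using ab xs ij by simp
      qed
    qed
  qed
  show ?thesis unfolding diameter_def
  proof (rule antisym)
    show "(SUP u\<in>{1..n}. SUP v\<in>{1..n}. gdist n G u v) \<le> 2"
      by (intro SUP_least le2)
    have h2: "2 \<le> (SUP v\<in>{1..n}. gdist n G i v)"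
      by (rule SUP_upper2[where i=j]) (use ij ge2 in auto)
    show "2 \<le> (SUP u\<in>{1..n}. SUP v\<in>{1..n}. gdist n G u v)"
      by (rule SUP_upper2[where i=i]) (use ij h2 in auto)
  qed
qed


definition ee :: "nat \<Rightarrow> nat \<Rightarrow> nat \<Rightarrow> nat" where "ee n a b = idx n (min a b) (max a b)"

lemma ee_props: "a \<in> {1..n} \<Longrightarrow> b \<in> {1..n} \<Longrightarrow> a \<noteq> b \<Longrightarrow>
  ee n a b < n * (n - 1) div 2 \<and> edge_list n ! ee n a b = (min a b, max a b)"
  unfolding ee_def by (rule idx_props) (auto simp: min_def max_def)

lemma ee_inj: "a \<in> {1..n} \<Longrightarrow> b \<in> {1..n} \<Longrightarrow> a \<noteq> b \<Longrightarrow>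
  a' \<in> {1..n} \<Longrightarrow> b' \<in> {1..n} \<Longrightarrow> a' \<noteq> b' \<Longrightarrow> ee n a b = ee n a' b' \<Longrightarrow> {a, b} = {a', b'}"
proof -
  assume as: "a \<in> {1..n}" "b \<in> {1..n}" "a \<noteq> b" "a' \<in> {1..n}" "b' \<in> {1..n}" "a' \<noteq> b'"
    and eq: "ee n a b = ee n a' b'"
  have "(min a b, max a b) = (min a' b', max a' b')"
    using ee_props[of a n b] ee_props[of a' n b'] as eq by metis
  moreover have "{a, b} = {min a b, max a b}" "{a', b'} = {min a' b', max a' b'}"
    by (auto simp: min_def max_def)
  ultimately show ?thesis by simp
qed

lemma adjn_ee: "a \<noteq> b \<Longrightarrow> adjn n m a b = bitn m (ee n a b)"
  by (auto simp: adjn_def ee_def min_def max_def)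

lemma bitn_01: "bitn m i \<in> {0, 1}"
  by (auto simp: bitn_def)

lemma lin01: "(a1::nat) \<in> {0, 1} \<Longrightarrow> b1 \<in> {0, 1} \<Longrightarrow> a2 \<in> {0, 1} \<Longrightarrow> b2 \<in> {0, 1} \<Longrightarrow>
  a1 + 2 * b1 = a2 + 2 * b2 \<Longrightarrow> a1 = a2 \<and> b1 = b2"
  by auto

definition BB :: "nat \<Rightarrow> nat \<Rightarrow> nat \<Rightarrow> nat set" where
  "BB n u v = {m. m < 2 ^ (n * (n - 1) div 2) \<and>
      (\<forall>w\<in>{1..n} - {u, v}. \<not> (adjn n m u w = 1 \<and> adjn n m v w = 1))}"

lemma card_BB:
  assumes uv: "1 \<le> u" "u < v" "v \<le> n"
  shows "card (BB n u v) \<le> 2 ^ (n * (n - 1) div 2 - 2 * (n - 2)) * 3 ^ (n - 2)"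
proof -
  define N where "N = n * (n - 1) div 2"
  define W where "W = {1..n} - {u, v}"
  define P where "P = ee n u ` W \<union> ee n v ` W"
  define R where "R = {..<N} - P"
  define \<phi> where "\<phi> m = (restrict (\<lambda>i. bitn m i) R,
      restrict (\<lambda>w. bitn m (ee n u w) + 2 * bitn m (ee n v w)) W)" for m
  have Wsub: "W \<subseteq> {1..n}" "u \<notin> W" "v \<notin> W" by (auto simp: W_def)
  have urange: "u \<in> {1..n}" "v \<in> {1..n}" using uv by auto
  have cardW: "card W = n - 2"
    using uv by (simp add: W_def card_Diff_subset)
  have PN: "P \<subseteq> {..<N}"
  proof
    fix i assume "i \<in> P"
    then obtain w where w: "w \<in> W" "i = ee n u w \<or> i = ee n v w" unfolding P_def by blast
    have "w \<in> {1..n}" "w \<noteq> u" "w \<noteq> v" using w(1) Wsub by auto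
    then have "ee n u w < N" "ee n v w < N"
      using ee_props[of u n w] ee_props[of v n w] urange unfolding N_def by auto
    then show "i \<in> {..<N}" using w(2) by auto
  qed
  have inj1: "inj_on (ee n u) W"
  proof (rule inj_onI)
    fix x y assume "x \<in> W" "y \<in> W" "ee n u x = ee n u y"
    then have "{u, x} = {u, y}" using ee_inj[of u n x u y] urange Wsub by blast
    then show "x = y" by (auto simp: doubleton_eq_iff)
  qed
  have inj2: "inj_on (ee n v) W"
  proof (rule inj_onI)
    fix x y assume "x \<in> W" "y \<in> W" "ee n v x = ee n v y"
    then have "{v, x} = {v, y}" using ee_inj[of v n x v y] urange Wsub by blast
    then show "x = y" by (auto simp: doubleton_eq_iff)
  qed
  have disj: "ee n u ` W \<inter> ee n v ` W = {}"
  proof (rule ccontr)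
    assume "ee n u ` W \<inter> ee n v ` W \<noteq> {}"
    then obtain x y where xy: "x \<in> W" "y \<in> W" "ee n u x = ee n v y" by blast
    then have "{u, x} = {v, y}" using ee_inj[of u n x v y] urange Wsub by blast
    then show False using uv xy Wsub by (auto simp: doubleton_eq_iff)
  qed
  have cardP: "card P = 2 * (n - 2)"
    unfolding P_def
    using card_Un_disjoint[OF finite_imageI finite_imageI disj] card_image[OF inj1] card_image[OF inj2] cardW
      finite_subset[OF Wsub(1)] by simp
  have cardR: "card R = N - 2 * (n - 2)"
    unfolding R_def using card_Diff_subset[OF finite_subset[OF PN] PN] cardP by simp
  have fin: "finite ((R \<rightarrow>\<^sub>E {0, 1::nat}) \<times> (W \<rightarrow>\<^sub>E {0, 1, 2::nat}))"
    using finite_subset[OF Wsub(1)] unfolding R_def by (intro finite_cartesian_product finite_PiE) auto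
  have cardT: "card ((R \<rightarrow>\<^sub>E {0, 1::nat}) \<times> (W \<rightarrow>\<^sub>E {0, 1, 2::nat})) = 2 ^ (N - 2 * (n - 2)) * 3 ^ (n - 2)"
  proof -
    have c2: "card {0, 1::nat} = 2" by simp
    have c3: "card {0, 1, 2::nat} = 3" by simp
    have fR: "finite R" unfolding R_def by simp
    have fW: "finite W" using finite_subset[OF Wsub(1)] by simp
    show ?thesis
      by (simp only: card_cartesian_product card_PiE[OF fR] card_PiE[OF fW] prod_constant c2 c3 cardR cardW)
  qed
  have img: "\<phi> ` BB n u v \<subseteq> (R \<rightarrow>\<^sub>E {0, 1::nat}) \<times> (W \<rightarrow>\<^sub>E {0, 1, 2::nat})"
  proof
    fix x assume "x \<in> \<phi> ` BB n u v"
    then obtain m where m: "m \<in> BB n u v" "x = \<phi> m" by blast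
    have "bitn m (ee n u w) + 2 * bitn m (ee n v w) \<in> {0, 1, 2}" if w: "w \<in> W" for w
    proof -
      have "w \<noteq> u" "w \<noteq> v" using w Wsub by auto
      then have "\<not> (bitn m (ee n u w) = 1 \<and> bitn m (ee n v w) = 1)"
        using m(1) w unfolding BB_def W_def by (auto simp: adjn_ee)
      then show ?thesis using bitn_01[of m "ee n u w"] bitn_01[of m "ee n v w"] by auto
    qed
    then show "x \<in> (R \<rightarrow>\<^sub>E {0, 1::nat}) \<times> (W \<rightarrow>\<^sub>E {0, 1, 2::nat})"
      using m(2) bitn_01 unfolding \<phi>_def by auto
  qed
  have inj: "inj_on \<phi> (BB n u v)"
  proof (rule inj_onI)
    fix m1 m2 assume m1: "m1 \<in> BB n u v" and m2: "m2 \<in> BB n u v" and eq: "\<phi> m1 = \<phi> m2"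
    have e1: "restrict (\<lambda>i. bitn m1 i) R = restrict (\<lambda>i. bitn m2 i) R"
      using eq unfolding \<phi>_def by simp
    have e2: "restrict (\<lambda>w. bitn m1 (ee n u w) + 2 * bitn m1 (ee n v w)) W =
        restrict (\<lambda>w. bitn m2 (ee n u w) + 2 * bitn m2 (ee n v w)) W"
      using eq unfolding \<phi>_def by simp
    have r: "bitn m1 i = bitn m2 i" if "i \<in> R" for i
      using fun_cong[OF e1, of i] that by simp
    have w: "bitn m1 (ee n u w) = bitn m2 (ee n u w) \<and> bitn m1 (ee n v w) = bitn m2 (ee n v w)"
      if "w \<in> W" for w
    proof -
      have "bitn m1 (ee n u w) + 2 * bitn m1 (ee n v w) = bitn m2 (ee n u w) + 2 * bitn m2 (ee n v w)"
        using fun_cong[OF e2, of w] that by simp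
      then show ?thesis
        using lin01[OF bitn_01 bitn_01 bitn_01 bitn_01] by blast
    qed
    have "\<forall>i<N. bitn m1 i = bitn m2 i"
    proof (intro allI impI)
      fix i assume "i < N"
      show "bitn m1 i = bitn m2 i"
      proof (cases "i \<in> P")
        case True then show ?thesis using w unfolding P_def by auto
      next
        case False then show ?thesis using r \<open>i < N\<close> unfolding R_def by auto
      qed
    qed
    then show "m1 = m2" using m1 m2 bits_eq[of m1 N m2] unfolding BB_def N_def by auto
  qed
  have "card (BB n u v) \<le> card ((R \<rightarrow>\<^sub>E {0, 1::nat}) \<times> (W \<rightarrow>\<^sub>E {0, 1, 2::nat}))"
    by (rule card_inj_on_le[OF inj img fin])
  then show ?thesis using cardT unfolding N_def by simp
qed

lemma card_bad:
  "card {m. m < 2 ^ (n * (n - 1) div 2) \<and> badp n m} \<le>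
     1 + (n + 1) ^ 2 * (2 ^ (n * (n - 1) div 2 - 2 * (n - 2)) * 3 ^ (n - 2))"
proof -
  define K :: nat where "K = 2 ^ (n * (n - 1) div 2 - 2 * (n - 2)) * 3 ^ (n - 2)"
  define Pairs where "Pairs = {p \<in> {1..n} \<times> {1..n}. fst p < snd p}"
  have finP: "finite Pairs" unfolding Pairs_def by auto
  have sub: "{m. m < 2 ^ (n * (n - 1) div 2) \<and> badp n m} \<subseteq>
      {2 ^ (n * (n - 1) div 2) - 1} \<union> (\<Union>p\<in>Pairs. BB n (fst p) (snd p))"
  proof
    fix m assume m: "m \<in> {m. m < 2 ^ (n * (n - 1) div 2) \<and> badp n m}"
    show "m \<in> {2 ^ (n * (n - 1) div 2) - 1} \<union> (\<Union>p\<in>Pairs. BB n (fst p) (snd p))"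
    proof (cases "m = 2 ^ (n * (n - 1) div 2) - 1")
      case True then show ?thesis by simp
    next
      case False
      then obtain u v where uv: "u < Suc n" "v < Suc n" "1 \<le> u" "u < v"
        "\<forall>w<Suc n. 1 \<le> w \<longrightarrow> w \<noteq> u \<longrightarrow> w \<noteq> v \<longrightarrow> \<not> (adjn n m u w = 1 \<and> adjn n m v w = 1)"
        using m unfolding badp_def by auto
      have "(u, v) \<in> Pairs" using uv unfolding Pairs_def by auto
      moreover have "m \<in> BB n u v" using uv m unfolding BB_def by auto
      ultimately show ?thesis by force
    qed
  qed
  have "card {m. m < 2 ^ (n * (n - 1) div 2) \<and> badp n m} \<le>
      card ({2 ^ (n * (n - 1) div 2) - 1} \<union> (\<Union>p\<in>Pairs. BB n (fst p) (snd p)))"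
    by (rule card_mono[OF _ sub]) (use finP in \<open>auto simp: BB_def\<close>)
  also have "\<dots> \<le> card {2 ^ (n * (n - 1) div 2) - 1::nat} + card (\<Union>p\<in>Pairs. BB n (fst p) (snd p))"
    by (rule card_Un_le)
  also have "card (\<Union>p\<in>Pairs. BB n (fst p) (snd p)) \<le> (\<Sum>p\<in>Pairs. card (BB n (fst p) (snd p)))"
    by (rule card_UN_le[OF finP])
  also have "\<dots> \<le> (\<Sum>p\<in>Pairs. K)"
    by (rule sum_mono) (use card_BB in \<open>auto simp: Pairs_def K_def\<close>)
  also have "\<dots> = card Pairs * K" by simp
  also have "card Pairs \<le> (n + 1) ^ 2"
  proof -
    have "card Pairs \<le> card ({1..n} \<times> {1..n})" unfolding Pairs_def by (rule card_mono) auto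
    also have "\<dots> = n * n" by simp
    also have "\<dots> \<le> (n + 1) ^ 2" by (simp add: power2_eq_square)
    finally show ?thesis .
  qed
  then have "card Pairs * K \<le> (n + 1) ^ 2 * K" by (rule mult_right_mono) simp
  finally show ?thesis unfolding K_def by simp
qed



lemma even_nn1: "even (n * (n - 1::nat))"
  by (cases "even n") auto

lemma real_N: "real (n * (n - 1) div 2) = real n * (real n - 1) / 2" if "1 \<le> n"
proof -
  have "real (n * (n - 1) div 2) = real (n * (n - 1)) / 2"
    using even_nn1[of n] by (simp add: real_of_nat_div)
  then show ?thesis using that by (simp add: of_nat_diff)
qed

lemma powr_id: "(6561/32768::real) powr (x/8) = (3/4) powr x * 2 powr (x/8)"
proof -
  have e: "(3/4::real)^8 = (3/4) powr 8" by (simp add: powr_numeral)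
  have "(6561/32768::real) powr (x/8) = ((3/4)^8 * 2) powr (x/8)" by (simp add: power_divide)
  also have "\<dots> = ((3/4)^8) powr (x/8) * 2 powr (x/8)" using powr_mult[of "(3/4::real)^8" 2 "x/8"] by simp
  also have "((3/4::real)^8) powr (x/8) = (3/4) powr x" by (subst e, subst powr_powr, simp)
  finally show ?thesis .
qed

lemma asym:
  fixes \<delta> :: "nat \<Rightarrow> nat" and c :: nat
  assumes "(\<lambda>n. real (\<delta> n)) \<in> o(\<lambda>n. real n)"
  shows "eventually (\<lambda>n. 4 \<le> n \<and> \<delta> n + c + 1 \<le> n * (n - 1) div 2 \<and>
     1 + (n + 1) ^ 2 * (2 ^ (n * (n - 1) div 2 - 2 * (n - 2)) * 3 ^ (n - 2)) \<le>
     (2::nat) ^ (n * (n - 1) div 2 - (\<delta> n + c + 1))) sequentially"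
proof -
  have e1: "eventually (\<lambda>n::nat. 4 \<le> n) sequentially" by (rule eventually_ge_at_top)
  have e2: "eventually (\<lambda>n. real (\<delta> n) \<le> real n / 8) sequentially"
    using landau_o.smallD[OF assms, of "1/8"] by simp
  have l3: "(\<lambda>n::nat. 2 powr (real n / 8) / 2 powr (real n * (real n - 1) / 2)) \<longlonglongrightarrow> 0"
    by real_asymp
  have l4: "(\<lambda>n::nat. (real n + 1) ^ 2 * (6561/32768) powr (real n / 8)) \<longlonglongrightarrow> 0"
    by real_asymp
  have l5: "filterlim (\<lambda>n::nat. real n * (real n - 1) / 2 - real n / 8) at_top sequentially"
    by real_asymp
  have e3: "eventually (\<lambda>n::nat. 2 ^ (c + 1) * (2 powr (real n / 8) / 2 powr (real n * (real n - 1) / 2)) < 1/2) sequentially"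
    by (rule order_tendstoD(2)[OF tendsto_mult_right_zero[OF l3]]) simp
  have e4: "eventually (\<lambda>n::nat. (16/9 * 2 ^ (c + 1)) * ((real n + 1) ^ 2 * (6561/32768) powr (real n / 8)) < 1/2) sequentially"
    by (rule order_tendstoD(2)[OF tendsto_mult_right_zero[OF l4]]) simp
  have e5: "eventually (\<lambda>n::nat. real (c + 1) \<le> real n * (real n - 1) / 2 - real n / 8) sequentially"
    using l5 unfolding filterlim_at_top by blast
  show ?thesis
  proof (rule eventually_mono[OF eventually_conj[OF e1 eventually_conj[OF e2 eventually_conj[OF e3 eventually_conj[OF e4 e5]]]]])
    fix n :: nat
    assume H: "4 \<le> n \<and> real (\<delta> n) \<le> real n / 8 \<and>
      2 ^ (c + 1) * (2 powr (real n / 8) / 2 powr (real n * (real n - 1) / 2)) < 1/2 \<and>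
      (16/9 * 2 ^ (c + 1)) * ((real n + 1) ^ 2 * (6561/32768) powr (real n / 8)) < 1/2 \<and>
      real (c + 1) \<le> real n * (real n - 1) / 2 - real n / 8"
    define N where "N = n * (n - 1) div 2"
    define D where "D = \<delta> n"
    have n4: "4 \<le> n" using H by simp
    have rN: "real N = real n * (real n - 1) / 2" unfolding N_def using n4 by (intro real_N) simp
    have DN: "D + c + 1 \<le> N"
    proof -
      have "real (D + c + 1) \<le> real N" using H rN unfolding D_def by simp
      then show ?thesis by linarith
    qed
    have nN: "2 * (n - 2) \<le> N"
    proof -
      have "4 * (n - 2) \<le> n * (n - 1)" using n4 by (intro mult_le_mono) auto
      then show ?thesis unfolding N_def by linarith
    qed
    define X :: real where "X = 2 ^ N"
    have Xpos: "X > 0" unfolding X_def by simp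
    have X_powr: "2 powr (real n * (real n - 1) / 2) = X" unfolding X_def rN[symmetric]
      by (simp add: powr_realpow)
    define T :: real where "T = 2 ^ (D + c + 1)"
    have T_le: "T \<le> 2 ^ (c + 1) * 2 powr (real n / 8)"
    proof -
      have "(2::real) ^ D = 2 powr real D" by (simp add: powr_realpow)
      also have "\<dots> \<le> 2 powr (real n / 8)" using H unfolding D_def by (intro powr_mono) auto
      finally have "(2::real) ^ D \<le> 2 powr (real n / 8)" .
      then show ?thesis unfolding T_def by (simp add: power_add mult.commute)
    qed
    have t1: "T < X / 2"
    proof -
      have h3: "2 ^ (c + 1) * (2 powr (real n / 8) / 2 powr (real n * (real n - 1) / 2)) < 1/2"
        using H by blast
      have h3': "2 ^ (c + 1) * (2 powr (real n / 8) / X) < 1/2" using h3 unfolding X_powr .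
      have "2 ^ (c + 1) * 2 powr (real n / 8) < X / 2"
        using h3' Xpos by (simp add: field_simps)
      then show ?thesis using T_le by linarith
    qed
    have pw: "(3/4::real) ^ n = (3/4) ^ (n - 2) * (9/16)"
    proof -
      have "n = (n - 2) + 2" using n4 by simp
      then have "(3/4::real) ^ n = (3/4) ^ (n - 2) * (3/4) ^ 2" by (metis power_add)
      then show ?thesis by (simp add: power2_eq_square)
    qed
    have t2: "(real n + 1) ^ 2 * (3/4) ^ (n - 2) * T < 1/2"
    proof -
      have Qeq: "(6561/32768::real) powr (real n / 8) = (3/4) ^ (n - 2) * (9/16) * 2 powr (real n / 8)"
        using powr_id[of "real n"] pw by (simp add: powr_realpow)
      have h4: "(16/9 * 2 ^ (c + 1)) * ((real n + 1) ^ 2 * (6561/32768) powr (real n / 8)) < 1/2"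
        using H by blast
      have h4': "(16/9 * 2 ^ (c + 1)) * ((real n + 1) ^ 2 * ((3/4) ^ (n - 2) * (9/16) * 2 powr (real n / 8))) < 1/2"
        using h4 unfolding Qeq .
      have "(real n + 1) ^ 2 * (3/4) ^ (n - 2) * (2 ^ (c + 1) * 2 powr (real n / 8)) =
         (16/9 * 2 ^ (c + 1)) * ((real n + 1) ^ 2 * ((3/4) ^ (n - 2) * (9/16) * 2 powr (real n / 8)))"
        by (simp add: algebra_simps)
      then have "(real n + 1) ^ 2 * (3/4) ^ (n - 2) * (2 ^ (c + 1) * 2 powr (real n / 8)) < 1/2"
        using h4' by linarith
      moreover have "(real n + 1) ^ 2 * (3/4) ^ (n - 2) * T \<le> (real n + 1) ^ 2 * (3/4) ^ (n - 2) * (2 ^ (c + 1) * 2 powr (real n / 8))"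
        using T_le by (intro mult_left_mono) auto
      ultimately show ?thesis by linarith
    qed
    have Tpos: "T > 0" unfolding T_def by simp
    have "real (1 + (n + 1) ^ 2 * (2 ^ (N - 2 * (n - 2)) * 3 ^ (n - 2))) =
        1 + (real n + 1) ^ 2 * (X / 4 ^ (n - 2) * 3 ^ (n - 2))"
    proof -
      have c2: "(2::real) ^ (N - 2 * (n - 2)) = X / 4 ^ (n - 2)"
        unfolding X_def using power_diff[of "2::real" "2 * (n - 2)" N] nN by (simp add: power_mult)
      show ?thesis by (simp add: c2)
    qed
    also have "\<dots> = 1 + (real n + 1) ^ 2 * (3/4) ^ (n - 2) * X"
      by (simp add: power_divide field_simps)
    also have "\<dots> \<le> X / T"
    proof -
      have "T * (1 + (real n + 1) ^ 2 * (3/4) ^ (n - 2) * X) = T + ((real n + 1) ^ 2 * (3/4) ^ (n - 2) * T) * X"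
        by (simp add: algebra_simps)
      also have "\<dots> \<le> X / 2 + (1/2) * X"
        using t1 t2 Xpos by (intro add_mono mult_right_mono) auto
      finally have "T * (1 + (real n + 1) ^ 2 * (3/4) ^ (n - 2) * X) \<le> X" by simp
      then show ?thesis using Tpos by (simp add: field_simps)
    qed
    also have "X / T = real (2 ^ (N - (D + c + 1)))"
      unfolding X_def T_def using power_diff[of "2::real" "D + c + 1" N] DN by simp
    finally have "1 + (n + 1) ^ 2 * (2 ^ (N - 2 * (n - 2)) * 3 ^ (n - 2)) \<le> (2::nat) ^ (N - (D + c + 1))"
      by (simp only: of_nat_le_iff)
    then show "4 \<le> n \<and> \<delta> n + c + 1 \<le> n * (n - 1) div 2 \<and>
     1 + (n + 1) ^ 2 * (2 ^ (n * (n - 1) div 2 - 2 * (n - 2)) * 3 ^ (n - 2)) \<le>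
     (2::nat) ^ (n * (n - 1) div 2 - (\<delta> n + c + 1))"
      using n4 DN unfolding N_def D_def by simp
  qed
qed


lemma triangle_mono: "a \<le> b \<Longrightarrow> triangle a \<le> triangle b"
  unfolding triangle_def by (intro div_le_mono mult_le_mono) auto

lemma decn_encode: "decn (prod_encode (n, d)) = n"
proof -
  let ?y = "prod_encode (n, d)"
  have y: "?y = triangle (n + d) + n" by (simp add: prod_encode_def)
  have tS: "Suc s * Suc (Suc s) div 2 = triangle (Suc s)" for s by (simp add: triangle_def)
  have "decs ?y = n + d" unfolding decs_def
  proof (rule Least_equality)
    show "?y < Suc (n + d) * Suc (Suc (n + d)) div 2"
      unfolding tS using y by simp
  next
    fix s assume "?y < Suc s * Suc (Suc s) div 2"
    then have s: "?y < triangle (Suc s)" unfolding tS .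
    show "n + d \<le> s"
    proof (rule ccontr)
      assume "\<not> n + d \<le> s"
      then have "triangle (Suc s) \<le> triangle (n + d)" by (intro triangle_mono) simp
      then show False using s y by simp
    qed
  qed
  then show ?thesis unfolding decn_def using y by (simp add: triangle_def)
qed

lemma cnt_card: "cnt n t = card {m. m < t \<and> badp n m}"
proof (induction t)
  case 0 then show ?case by (simp add: cnt_def)
next
  case (Suc t)
  have "cnt n (Suc t) = cnt n t + (if badp n t then 1 else 0)" by (simp add: cnt_def)
  moreover have "{m. m < Suc t \<and> badp n m} = {m. m < t \<and> badp n m} \<union> (if badp n t then {t} else {})"
    by (auto simp: less_Suc_eq)
  ultimately show ?case using Suc by (simp add: card_insert_if)
qed

lemma compress:
  assumes U: "universal U"
  shows "\<exists>c. \<forall>n d G L. badp n (bval (E n G)) \<longrightarrow>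
     card {m. m < 2 ^ (n * (n - 1) div 2) \<and> badp n m} \<le> 2 ^ L \<longrightarrow>
     KC U (E n G) (prod_encode (n, d)) \<le> L + c"
proof -
  obtain M where M: "\<forall>a y z. a < cnt (decn y) (Suc z) \<and> (\<forall>z'<z. \<not> a < cnt (decn y) (Suc z')) \<longrightarrow>
      ev M [a, y] (2 ^ (decn y * (decn y - 1) div 2) - 1 + z)"
    using machine by blast
  obtain c where c: "\<forall>p y x. outputs M p y x \<longrightarrow> (\<exists>q. outputs U q y x \<and> length q \<le> length p + c)"
    using U unfolding universal_def by blast
  show ?thesis
  proof (intro exI[of _ c] allI impI)
    fix n d G L
    assume bad: "badp n (bval (E n G))"
      and cardS: "card {m. m < 2 ^ (n * (n - 1) div 2) \<and> badp n m} \<le> 2 ^ L"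
    define N where "N = n * (n - 1) div 2"
    define x where "x = E n G"
    define m0 where "m0 = bval x"
    define y where "y = prod_encode (n, d)"
    define a where "a = card {m. m < m0 \<and> badp n m}"
    have lenx: "length x = N" unfolding x_def N_def by (simp add: length_E)
    have m0N: "m0 < 2 ^ N" unfolding m0_def using bval_less[of x] lenx by simp
    have bad0: "badp n m0" using bad unfolding m0_def x_def .
    have sub: "{m. m < m0 \<and> badp n m} \<subset> {m. m < 2 ^ N \<and> badp n m}"
      using m0N bad0 by auto
    have "a < card {m. m < 2 ^ N \<and> badp n m}"
      unfolding a_def by (rule psubset_card_mono[OF _ sub]) simp
    then have "a < 2 ^ L" using cardS unfolding N_def by linarith
    then obtain p where p: "nat_of_bl p = a" "length p \<le> L" using bl_exists by blast
    have dy: "decn y = n" unfolding y_def by (rule decn_encode)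
    have cntS: "cnt n (Suc m0) = Suc a"
    proof -
      have "{m. m < Suc m0 \<and> badp n m} = insert m0 {m. m < m0 \<and> badp n m}"
        using bad0 by (auto simp: less_Suc_eq)
      then show ?thesis unfolding cnt_card a_def by simp
    qed
    have cntle: "cnt n (Suc z') \<le> a" if "z' < m0" for z'
      unfolding cnt_card a_def by (rule card_mono) (use that in auto)
    have "a < cnt (decn y) (Suc m0) \<and> (\<forall>z'<m0. \<not> a < cnt (decn y) (Suc z'))"
      using cntS cntle dy by (auto simp: not_less)
    then have "ev M [a, y] (2 ^ (decn y * (decn y - 1) div 2) - 1 + m0)"
      using M by blast
    then have "outputs M p y x"
      unfolding outputs_def p(1) using nat_of_bl_bval[of x] lenx dy unfolding N_def m0_def by simp
    then obtain q where q: "outputs U q y x" "length q \<le> length p + c" using c by blast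
    have "KC U x y \<le> length q" unfolding KC_def by (rule Least_le) (use q in blast)
    then show "KC U (E n G) (prod_encode (n, d)) \<le> L + c" using q p unfolding x_def y_def by linarith
  qed
qed

theorem lemma2:
  fixes \<delta> :: "nat \<Rightarrow> nat" and U :: recf
  assumes "universal U"
    and "(\<lambda>n. real (\<delta> n)) \<in> o(\<lambda>n. real n)"
  shows "\<exists>n0. \<forall>n\<ge>n0. \<forall>G. graph_on n G \<and> random_graph n \<delta> U G \<longrightarrow> diameter n G = 2"
proof -
  obtain c where c: "\<forall>n d G L. badp n (bval (E n G)) \<longrightarrow>
     card {m. m < 2 ^ (n * (n - 1) div 2) \<and> badp n m} \<le> 2 ^ L \<longrightarrow>
     KC U (E n G) (prod_encode (n, d)) \<le> L + c"
    using compress[OF assms(1)] by blast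
  obtain n0 where n0: "\<forall>n\<ge>n0. 4 \<le> n \<and> \<delta> n + c + 1 \<le> n * (n - 1) div 2 \<and>
     1 + (n + 1) ^ 2 * (2 ^ (n * (n - 1) div 2 - 2 * (n - 2)) * 3 ^ (n - 2)) \<le>
     (2::nat) ^ (n * (n - 1) div 2 - (\<delta> n + c + 1))"
    using asym[OF assms(2), of c] unfolding eventually_sequentially by blast
  show ?thesis
  proof (intro exI[of _ n0] allI impI)
    fix n G assume n: "n0 \<le> n" and G: "graph_on n G \<and> random_graph n \<delta> U G"
    define N where "N = n * (n - 1) div 2"
    have P: "4 \<le> n" "\<delta> n + c + 1 \<le> N"
      "1 + (n + 1) ^ 2 * (2 ^ (N - 2 * (n - 2)) * 3 ^ (n - 2)) \<le> (2::nat) ^ (N - (\<delta> n + c + 1))"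
      using n0 n unfolding N_def by auto
    show "diameter n G = 2"
    proof (rule good_diam)
      show "2 \<le> n" using P by simp
      show "\<not> badp n (bval (E n G))"
      proof
        assume bad: "badp n (bval (E n G))"
        have "card {m. m < 2 ^ N \<and> badp n m} \<le> 2 ^ (N - (\<delta> n + c + 1))"
          using card_bad[of n] P(3) unfolding N_def by linarith
        then have "KC U (E n G) (prod_encode (n, \<delta> n)) \<le> (N - (\<delta> n + c + 1)) + c"
          using c bad unfolding N_def by blast
        moreover have "int (KC U (E n G) (prod_encode (n, \<delta> n))) \<ge> int N - int (\<delta> n)"
          using G unfolding random_graph_def N_def by simp
        ultimately show False using P(2) by linarith
      qed
    qed
  qed
qed

end
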